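(* For every $l\in\mathbb N$, the curve $\Gamma_l=\{P_l(\lambda,\mu^2)=0\}$ intersects the line $\{\mu=0\}$ (in the projective plane containing $\mathbb C^2_{(\lambda,\mu)}$) exactly at the points with $\lambda$-abscissas $0,\ 1\cdot(l-1),\ 2(l-2),\ \dots,\ (l-1)\cdot 1$. All these intersection points are singular points of $\Gamma_l$, except for the points with abscissas $0$ and $\frac{l^2}{4}$ (the latter only when $l$ is even), which are regular points of $\Gamma_l$ at which $\Gamma_l$ intersects the line $\{\mu=0\}$ orthogonally.
   Context: For $l\in\mathbb N$ and $\mu\in\mathbb C$, $H_l$ is the tridiagonal $l\times l$ matrix with entries $H_{l;jj}=(1-j)(l-j+1)$, $H_{l;j,j+1}=\mu j$, $H_{l;j,j-1}=\mu(l-j+1)$, and $H_{l;ij}=0$ if $|i-j|\geq 2$; $\det(H_l+\lambda\,\mathrm{Id})$ is a polynomial of degree $l$ in $(\lambda,\mu^2)$, written $P_l(\lambda,\mu^2)$. *)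

theory Defs
  imports "HOL-Analysis.Derivative" "Jordan_Normal_Form.Determinant"
begin

text \<open>The tridiagonal l x l matrix H_l (indices 1..l in the paper, stored 0-based).\<close>
definition H_mat :: "nat \<Rightarrow> complex \<Rightarrow> complex mat" where
  "H_mat l \<mu> = mat l l (\<lambda>(i, j).
     (let a = i + 1; b = j + 1 in
      if b = a then (1 - of_nat a) * (of_nat l - of_nat a + 1)
      else if b = a + 1 then \<mu> * of_nat a
      else if a = b + 1 then \<mu> * (of_nat l - of_nat a + 1)
      else 0))"

text \<open>Defining function of the curve Gamma_l: (lambda, mu) maps to P_l(lambda, mu^2) = det(H_l + lambda Id).\<close>
definition Gamma_eq :: "nat \<Rightarrow> complex \<Rightarrow> complex \<Rightarrow> complex" where
  "Gamma_eq l lam \<mu> = det (H_mat l \<mu> + lam \<cdot>\<^sub>m 1\<^sub>m l)"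

definition d_lam :: "(complex \<Rightarrow> complex \<Rightarrow> complex) \<Rightarrow> complex \<Rightarrow> complex \<Rightarrow> complex" where
  "d_lam F x y = deriv (\<lambda>t. F t y) x"

definition d_mu :: "(complex \<Rightarrow> complex \<Rightarrow> complex) \<Rightarrow> complex \<Rightarrow> complex \<Rightarrow> complex" where
  "d_mu F x y = deriv (\<lambda>t. F x t) y"

definition singular_point :: "(complex \<Rightarrow> complex \<Rightarrow> complex) \<Rightarrow> complex \<Rightarrow> complex \<Rightarrow> bool" where
  "singular_point F x y \<longleftrightarrow> F x y = 0 \<and> d_lam F x y = 0 \<and> d_mu F x y = 0"

definition regular_point :: "(complex \<Rightarrow> complex \<Rightarrow> complex) \<Rightarrow> complex \<Rightarrow> complex \<Rightarrow> bool" where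
  "regular_point F x y \<longleftrightarrow> F x y = 0 \<and> (d_lam F x y \<noteq> 0 \<or> d_mu F x y \<noteq> 0)"

text \<open>At a regular point, the tangent line (vectors (a,b) with F_lambda a + F_mu b = 0)
  is orthogonal to the line {mu = 0}, i.e. orthogonal to its direction (1,0).\<close>
definition meets_mu_axis_orthogonally :: "(complex \<Rightarrow> complex \<Rightarrow> complex) \<Rightarrow> complex \<Rightarrow> complex \<Rightarrow> bool" where
  "meets_mu_axis_orthogonally F x y \<longleftrightarrow>
     (\<forall>a b. d_lam F x y * a + d_mu F x y * b = 0 \<longrightarrow> a = 0)"

text \<open>The projective closure of the polynomial curve F = 0 passes through the point at infinity
  [1:0:0] of the line {mu = 0}: writing F = sum c_ij lambda^i mu^j of total degree d,
  the homogenisation vanishes at (1,0,0) iff c_d0 = 0.\<close>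
definition closure_meets_inf_point_of_mu_axis :: "(complex \<Rightarrow> complex \<Rightarrow> complex) \<Rightarrow> bool" where
  "closure_meets_inf_point_of_mu_axis F \<longleftrightarrow>
     (\<exists>d c. (\<forall>x y. F x y = (\<Sum>i\<le>d. \<Sum>j\<le>d - i. c i j * x ^ i * y ^ j))
            \<and> (\<exists>i\<le>d. c i (d - i) \<noteq> 0) \<and> c d 0 = 0)"

end

theory Submission
  imports Defs
begin


definition cc :: "nat \<Rightarrow> nat \<Rightarrow> nat \<Rightarrow> complex" where
  "cc l i j = (if j = i then - (of_nat (i * (l - i))) else 0)"
definition gg :: "nat \<Rightarrow> nat \<Rightarrow> nat \<Rightarrow> complex" where
  "gg l i j = (if j = i + 1 then of_nat (i+1) else if i = j + 1 then of_nat l - of_nat (i+1) + 1 else 0)"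

lemma ent:
  assumes "i < l" "j < l"
  shows "(H_mat l \<mu> + lam \<cdot>\<^sub>m 1\<^sub>m l) $$ (i,j) = cc l i j + lam * (if i = j then 1 else 0) + \<mu> * gg l i j"
  using assms by (auto simp: H_mat_def cc_def gg_def Let_def of_nat_diff algebra_simps)

lemma leib: "Gamma_eq l lam \<mu> = (\<Sum>p\<in>{p. p permutes {0..<l}}. signof p *
   (\<Prod>i=0..<l. cc l i (p i) + lam * (if i = p i then 1 else 0) + \<mu> * gg l i (p i)))"
proof -
  have c: "H_mat l \<mu> + lam \<cdot>\<^sub>m 1\<^sub>m l \<in> carrier_mat l l" by (simp add: H_mat_def)
  show ?thesis unfolding Gamma_eq_def det_def'[OF c]
    apply (intro sum.cong refl arg_cong2[where f="(*)"] prod.cong)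
    apply (rule ent) by (auto simp: permutes_def)
qed



definition rr :: "nat \<Rightarrow> nat \<Rightarrow> complex" where "rr l i = of_nat (i * (l - i))"

lemma perm_moved2:
  assumes "p permutes S" "p \<noteq> id"
  shows "\<exists>a b. a \<noteq> b \<and> p a \<noteq> a \<and> p b \<noteq> b"
proof -
  obtain a where a: "p a \<noteq> a" using assms(2) by (metis eq_id_iff)
  have "p (p a) \<noteq> p a" using a assms(1) by (metis permutes_inj injD)
  thus ?thesis using a by metis
qed

lemma perm_moved_lt:
  assumes "p permutes {0..<l}" "p a \<noteq> a" shows "a < l"
  using assms by (meson atLeastLessThan_iff permutes_not_in zero_le)

lemma F0: "Gamma_eq l t 0 = (\<Prod>i=0..<l. t - rr l i)"
proof -
  let ?T = "\<lambda>p. signof p * (\<Prod>i=0..<l. cc l i (p i) + t * (if i = p i then 1 else 0) + 0 * gg l i (p i)) :: complex"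
  have idp: "id \<in> {p. p permutes {0..<l}}" by (simp add: permutes_id)
  have z: "?T p = 0" if "p \<in> {p. p permutes {0..<l}} - {id}" for p
  proof -
    from that have pp: "p permutes {0..<l}" "p \<noteq> id" by auto
    then obtain a where a: "p a \<noteq> a" by (metis eq_id_iff)
    have al: "a < l" using perm_moved_lt[OF pp(1) a] .
    have "(\<Prod>i=0..<l. cc l i (p i) + t * (if i = p i then 1 else 0) + 0 * gg l i (p i)) = 0"
      apply (rule prod_zero) using al a by (auto intro!: bexI[of _ a] simp: cc_def)
    thus ?thesis by simp
  qed
  have "Gamma_eq l t 0 = (\<Sum>p\<in>{p. p permutes {0..<l}}. ?T p)" by (rule leib)
  also have "\<dots> = ?T id + (\<Sum>p\<in>{p. p permutes {0..<l}} - {id}. ?T p)"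
    by (rule sum.remove[OF _ idp]) (simp add: finite_permutations)
  also have "\<dots> = ?T id"
  proof -
    have "(\<Sum>p\<in>{p. p permutes {0..<l}} - {id}. ?T p) = 0" by (rule sum.neutral) (use z in blast)
    thus ?thesis by (simp only: add_0_right)
  qed
  also have "\<dots> = (\<Prod>i=0..<l. t - rr l i)"
    by (simp add: sign_id cc_def rr_def)
  finally show ?thesis .
qed

lemma dmu: "((\<lambda>u. Gamma_eq l x u) has_field_derivative 0) (at 0)"
proof -
  define A where "A p i = cc l i (p i) + x * (if i = p i then 1 else 0)" for p :: "nat \<Rightarrow> nat" and i
  define B where "B p i = gg l i (p i)" for p :: "nat \<Rightarrow> nat" and i
  have eq: "(\<lambda>u. Gamma_eq l x u) = (\<lambda>u. \<Sum>p\<in>{p. p permutes {0..<l}}. signof p * (\<Prod>i=0..<l. A p i + u * B p i))"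
    by (rule ext, subst leib) (simp add: A_def B_def mult.commute)
  have d: "((\<lambda>u. \<Sum>p\<in>{p. p permutes {0..<l}}. signof p * (\<Prod>i=0..<l. A p i + u * B p i)) has_field_derivative
     (\<Sum>p\<in>{p. p permutes {0..<l}}. signof p * (\<Sum>i\<in>{0..<l}. B p i * (\<Prod>j\<in>{0..<l}-{i}. A p j + 0 * B p j)))) (at 0)"
    apply (intro DERIV_sum DERIV_cmult has_field_derivative_prod)
    apply (auto intro!: derivative_eq_intros)
    done
  have z: "(\<Sum>p\<in>{p. p permutes {0..<l}}. signof p * (\<Sum>i\<in>{0..<l}. B p i * (\<Prod>j\<in>{0..<l}-{i}. A p j + 0 * B p j))) = 0"
  proof (intro sum.neutral ballI)
    fix p assume "p \<in> {p. p permutes {0..<l}}"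
    hence pp: "p permutes {0..<l}" by simp
    show "signof p * (\<Sum>i\<in>{0..<l}. B p i * (\<Prod>j\<in>{0..<l}-{i}. A p j + 0 * B p j)) = 0"
    proof (cases "p = id")
      case True thus ?thesis by (simp add: B_def gg_def)
    next
      case False
      then obtain a b where ab: "a \<noteq> b" "p a \<noteq> a" "p b \<noteq> b" using perm_moved2[OF pp] by blast
      have al: "a < l" "b < l" using perm_moved_lt[OF pp] ab by auto
      have h: "(\<Prod>j\<in>{0..<l}-{i}. A p j + 0 * B p j) = 0" for i
      proof (cases "i = a")
        case True
        show ?thesis apply (rule prod_zero) using ab al True by (auto intro!: bexI[of _ b] simp: A_def cc_def)
      next
        case False
        show ?thesis apply (rule prod_zero) using ab al False by (auto intro!: bexI[of _ a] simp: A_def cc_def)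
      qed
      show ?thesis by (simp only: h mult_zero_right sum.neutral_const)
    qed
  qed
  show ?thesis using d unfolding eq z .
qed



definition Pr :: "nat \<Rightarrow> complex \<Rightarrow> complex poly" where
  "Pr l s = (\<Sum>p\<in>{p. p permutes {0..<l}}. smult (signof p)
      (\<Prod>i=0..<l. [: cc l i (p i), (if i = p i then 1 else 0) + s * gg l i (p i) :]))"

lemma ray: "Gamma_eq l t (s*t) = poly (Pr l s) t"
  unfolding leib Pr_def poly_sum poly_smult poly_prod
  by (intro sum.cong refl arg_cong2[where f="(*)"] prod.cong) (simp add: algebra_simps)

lemma ray_deg: "degree (Pr l s) \<le> l"
  unfolding Pr_def
proof (rule degree_sum_le)
  show "finite {p. p permutes {0..<l}}" by (simp add: finite_permutations)
  fix p
  have "degree (\<Prod>i=0..<l. [: cc l i (p i), (if i = p i then 1 else 0) + s * gg l i (p i) :])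
     \<le> (\<Sum>i=0..<l. degree [: cc l i (p i), (if i = p i then 1 else 0) + s * gg l i (p i) :])"
    using degree_prod_sum_le[of "{0..<l}" "\<lambda>i. [: cc l i (p i), (if i = p i then 1 else 0) + s * gg l i (p i) :]"]
    unfolding o_def by simp
  also have "\<dots> \<le> (\<Sum>i=0..<l. 1)" by (intro sum_mono) simp
  finally show "degree (smult (signof p) (\<Prod>i=0..<l. [: cc l i (p i), (if i = p i then 1 else 0) + s * gg l i (p i) :])) \<le> l"
    using degree_smult_le[of "signof p"] by (simp add: order_trans)
qed

lemma dlam: "((\<lambda>t. Gamma_eq l t 0) has_field_derivative
   (\<Sum>i\<in>{0..<l}. (\<Prod>j\<in>{0..<l}-{i}. x - rr l j))) (at x)"
proof -
  have "((\<lambda>u. \<Prod>i\<in>{0..<l}. u - rr l i) has_field_derivative (\<Sum>i\<in>{0..<l}. 1 * (\<Prod>j\<in>{0..<l}-{i}. x - rr l j))) (at x)"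
    by (rule has_field_derivative_prod) (auto intro!: derivative_eq_intros)
  thus ?thesis unfolding F0 by simp
qed

lemma rr_eq:
  assumes "k < l" "k' < l" "rr l k = rr l k'"
  shows "k = k' \<or> k + k' = l"
proof -
  have "k * (l - k) = k' * (l - k')" using assms(3) unfolding rr_def using of_nat_eq_iff by blast
  hence "int k * (int l - int k) = int k' * (int l - int k')"
    using assms by (metis of_nat_diff of_nat_mult less_imp_le)
  hence "(int k - int k') * (int l - int k - int k') = 0" by (simp add: algebra_simps)
  thus ?thesis by auto
qed



lemma coeff_R:
  fixes c :: "nat \<Rightarrow> nat \<Rightarrow> complex"
  assumes "k \<ge> d"
  shows "coeff (\<Sum>i\<le>d. \<Sum>j\<le>d-i. monom (c i j * s^j) (i+j)) k
       = (if k = d then (\<Sum>i\<le>d. c i (d-i) * s^(d-i)) else 0)"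
proof -
  have "coeff (\<Sum>i\<le>d. \<Sum>j\<le>d-i. monom (c i j * s^j) (i+j)) k
      = (\<Sum>i\<le>d. \<Sum>j\<le>d-i. if i + j = k then c i j * s^j else 0)"
    by (simp add: coeff_sum coeff_monom)
  also have "\<dots> = (\<Sum>i\<le>d. if k = d then c i (d-i) * s^(d-i) else 0)"
  proof (intro sum.cong refl)
    fix i assume i: "i \<in> {..d}"
    have "(\<Sum>j\<le>d-i. if i + j = k then c i j * s^j else 0) = (\<Sum>j\<le>d-i. if j = d - i then (if k = d then c i j * s^j else 0) else 0)"
      using i assms by (intro sum.cong refl) auto
    also have "\<dots> = (if k = d then c i (d-i) * s^(d-i) else 0)" by (cases "k = d") simp_all
    finally show "(\<Sum>j\<le>d-i. if i + j = k then c i j * s^j else 0) = (if k = d then c i (d-i) * s^(d-i) else 0)" .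
  qed
  also have "\<dots> = (if k = d then (\<Sum>i\<le>d. c i (d-i) * s^(d-i)) else 0)" by auto
  finally show ?thesis .
qed

lemma poly_R:
  fixes c :: "nat \<Rightarrow> nat \<Rightarrow> complex"
  shows "poly (\<Sum>i\<le>d. \<Sum>j\<le>d-i. monom (c i j * s^j) (i+j)) t = (\<Sum>i\<le>d. \<Sum>j\<le>d-i. c i j * t ^ i * (s*t) ^ j)"
  by (simp add: poly_sum poly_monom power_add power_mult_distrib algebra_simps)

lemma P0_coeff: "coeff (\<Prod>i=0..<l. [:- rr l i, 1:]) l = 1"
proof -
  have d: "degree (\<Prod>i=0..<l. [:- rr l i, 1:]) = l"
    by (subst degree_prod_eq_sum_degree) auto
  have "lead_coeff (\<Prod>i=0..<l. [:- rr l i, 1:]) = 1" by (simp add: lead_coeff_prod)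
  thus ?thesis using d by simp
qed

lemma not_closure: "\<not> closure_meets_inf_point_of_mu_axis (Gamma_eq l)"
proof
  assume "closure_meets_inf_point_of_mu_axis (Gamma_eq l)"
  then obtain d c where rep: "\<And>x y. Gamma_eq l x y = (\<Sum>i\<le>d. \<Sum>j\<le>d - i. c i j * x ^ i * y ^ j)"
    and i0: "\<exists>i\<le>d. c i (d - i) \<noteq> 0" and cd: "c d 0 = 0"
    unfolding closure_meets_inf_point_of_mu_axis_def by blast
  define R where "R s = (\<Sum>i\<le>d. \<Sum>j\<le>d-i. monom (c i j * s^j) (i+j))" for s
  have RP: "R s = Pr l s" for s
  proof -
    have "poly (R s) = poly (Pr l s)"
    proof
      fix t show "poly (R s) t = poly (Pr l s) t"
        unfolding R_def poly_R ray[symmetric] rep ..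
    qed
    thus ?thesis by (simp add: poly_eq_poly_eq_iff)
  qed
  show False
  proof (cases "d > l")
    case True
    define Q where "Q = (\<Sum>i\<le>d. monom (c i (d-i)) (d-i))"
    obtain i where i: "i \<le> d" "c i (d-i) \<noteq> 0" using i0 by blast
    have "coeff Q (d-i) = (\<Sum>i'\<le>d. if d - i' = d - i then c i' (d-i') else 0)"
      unfolding Q_def by (simp add: coeff_sum coeff_monom)
    also have "\<dots> = (\<Sum>i'\<le>d. if i' = i then c i' (d-i') else 0)"
      using i by (intro sum.cong refl) auto
    also have "\<dots> = c i (d-i)" using i by (subst sum.delta) auto
    finally have cQ: "coeff Q (d-i) = c i (d-i)" .
    have "Q \<noteq> 0"
    proof
      assume "Q = 0"
      hence "coeff Q (d-i) = 0" by simp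
      thus False using cQ i(2) by simp
    qed
    hence fQ: "finite {x. poly Q x = 0}" by (rule poly_roots_finite)
    have "\<exists>s. s \<notin> {x. poly Q x = 0}" by (rule ex_new_if_finite[OF infinite_UNIV_char_0 fQ])
    then obtain s where s: "s \<notin> {x. poly Q x = 0}" by (elim exE)
    have "coeff (R s) d = (\<Sum>i\<le>d. c i (d-i) * s^(d-i))"
      unfolding R_def by (subst coeff_R) auto
    also have "\<dots> = poly Q s" unfolding Q_def by (simp add: poly_sum poly_monom)
    finally have ne: "coeff (R s) d \<noteq> 0" using s by simp
    have "coeff (Pr l s) d = 0" using ray_deg[of l s] True by (intro coeff_eq_0) simp
    thus False using ne RP by simp
  next
    case False
    have "coeff (R 0) l = (if l = d then (\<Sum>i\<le>d. c i (d-i) * 0^(d-i)) else 0)"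
      unfolding R_def using False by (subst coeff_R) auto
    also have "\<dots> = 0"
    proof -
      have "(\<Sum>i\<le>d. c i (d-i) * 0^(d-i)) = (\<Sum>i\<le>d. if i = d then c i (d-i) else 0)"
        by (intro sum.cong refl) auto
      also have "\<dots> = c d 0" by (subst sum.delta) auto
      finally show ?thesis using cd by simp
    qed
    finally have z: "coeff (R 0) l = 0" .
    have "poly (R 0) = poly (\<Prod>i=0..<l. [:- rr l i, 1:])"
    proof
      fix t
      have "poly (R 0) t = Gamma_eq l t (0 * t)" using RP ray by metis
      also have "\<dots> = poly (\<Prod>i=0..<l. [:- rr l i, 1:]) t" by (simp add: F0 poly_prod)
      finally show "poly (R 0) t = poly (\<Prod>i=0..<l. [:- rr l i, 1:]) t" .
    qed
    hence "R 0 = (\<Prod>i=0..<l. [:- rr l i, 1:])" by (simp add: poly_eq_poly_eq_iff)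
    thus False using z P0_coeff[of l] by simp
  qed
qed



lemma root: "Gamma_eq l x 0 = 0 \<longleftrightarrow> (\<exists>k<l. x = rr l k)"
  proof -
    have "(\<Prod>i=0..<l. x - rr l i) = 0 \<longleftrightarrow> (\<exists>a\<in>{0..<l}. x - rr l a = 0)"
      by (rule prod_zero_iff) simp
    also have "\<dots> \<longleftrightarrow> (\<exists>k<l. x = rr l k)" by auto
    finally show ?thesis unfolding F0 .
  qed
lemma rootset: "{x. Gamma_eq l x 0 = 0} = {of_nat (k * (l - k)) | k. k < l}"
proof -
  have "{x. Gamma_eq l x 0 = 0} = {x. \<exists>k<l. x = rr l k}" by (simp only: root)
  also have "\<dots> = {of_nat (k * (l - k)) | k. k < l}" unfolding rr_def by (intro Collect_cong) auto
  finally show ?thesis .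
qed

lemma half_sq: "rr (2*m) m = of_nat ((2*m)\<^sup>2) / 4"
proof -
  have a: "2*m - m = m" by simp
  have b: "(2*m)\<^sup>2 = 4*(m*m)" by (simp add: power2_eq_square)
  have "rr (2*m) m = of_nat (m*m)" unfolding rr_def a ..
  also have "\<dots> = of_nat (4*(m*m)) / (4::complex)" by simp
  finally show ?thesis unfolding b .
qed

theorem proposition1p11:
  fixes l :: nat
  assumes "l \<ge> 1"
  shows "{x. Gamma_eq l x 0 = 0} = {of_nat (k * (l - k)) | k. k < l}
    \<and> \<not> closure_meets_inf_point_of_mu_axis (Gamma_eq l)
    \<and> (\<forall>x. Gamma_eq l x 0 = 0 \<longrightarrow>
           (if x = 0 \<or> (even l \<and> x = of_nat (l\<^sup>2) / 4)
            then regular_point (Gamma_eq l) x 0 \<and> meets_mu_axis_orthogonally (Gamma_eq l) x 0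
            else singular_point (Gamma_eq l) x 0))"
proof (intro conjI allI impI)
  show "{x. Gamma_eq l x 0 = 0} = {of_nat (k * (l - k)) | k. k < l}" by (rule rootset)
  show "\<not> closure_meets_inf_point_of_mu_axis (Gamma_eq l)" by (rule not_closure)
  fix x assume x0: "Gamma_eq l x 0 = 0"
  have "\<exists>k<l. x = rr l k" using x0 by (simp only: root)
  then obtain k where k: "k < l" "x = rr l k" by blast
  define T where "T i = (\<Prod>j\<in>{0..<l}-{i}. x - rr l j)" for i
  have dl: "d_lam (Gamma_eq l) x 0 = (\<Sum>i\<in>{0..<l}. T i)"
    unfolding d_lam_def T_def by (rule DERIV_imp_deriv[OF dlam])
  have dm: "d_mu (Gamma_eq l) x 0 = 0"
    unfolding d_mu_def by (rule DERIV_imp_deriv[OF dmu])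
  show "if x = 0 \<or> (even l \<and> x = of_nat (l\<^sup>2) / 4)
            then regular_point (Gamma_eq l) x 0 \<and> meets_mu_axis_orthogonally (Gamma_eq l) x 0
            else singular_point (Gamma_eq l) x 0"
  proof (cases "x = 0 \<or> (even l \<and> x = of_nat (l\<^sup>2) / 4)")
    case True
    have uq: "j = k" if "j < l" "rr l j = x" for j
    proof -
      have z: "a = 0" if "a < l" "rr l a = 0" for a
      proof -
        have "a * (l - a) = 0" using that(2) unfolding rr_def by (simp only: of_nat_eq_0_iff)
        thus ?thesis using that(1) by auto
      qed
      show ?thesis
      proof (cases "x = 0")
        case True
        have "j = 0" by (rule z) (use that True in simp_all)
        moreover have "k = 0" by (rule z) (use k True in simp_all)
        ultimately show ?thesis by simp
      next
        case False
        with True obtain m where m: "l = 2*m" "x = of_nat (l\<^sup>2) / 4" by (auto elim: evenE)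
        have ml: "m < l" using m assms by auto
        have "rr l m = x" using m half_sq[of m] by simp
        hence r: "rr l j = rr l m" "rr l k = rr l m" using that k by simp_all
        have "j = m \<or> j + m = l" by (rule rr_eq[OF that(1) ml r(1)])
        hence "j = m" using m(1) by linarith
        moreover have "k = m \<or> k + m = l" by (rule rr_eq[OF k(1) ml r(2)])
        hence "k = m" using m(1) by linarith
        ultimately show ?thesis by simp
      qed
    qed
    have fin: "finite {0..<l}" by simp
    have kin: "k \<in> {0..<l}" using k by simp
    have s1: "(\<Sum>i\<in>{0..<l}. T i) = T k + (\<Sum>i\<in>{0..<l}-{k}. T i)"
      by (rule sum.remove[OF fin kin])
    have s2: "(\<Sum>i\<in>{0..<l}-{k}. T i) = 0"
    proof (rule sum.neutral, rule ballI)
      fix i assume i: "i \<in> {0..<l}-{k}"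
      have "k \<in> {0..<l}-{i}" "x - rr l k = 0" using i k by auto
      thus "T i = 0" unfolding T_def by (intro prod_zero finite_Diff fin) blast
    qed
    have "d_lam (Gamma_eq l) x 0 = T k" using dl s1 s2 by simp
    moreover have "T k \<noteq> 0" unfolding T_def
    proof (subst prod_zero_iff)
      show "finite ({0..<l} - {k})" by simp
      show "\<not> (\<exists>j\<in>{0..<l} - {k}. x - rr l j = 0)"
      proof
        assume "\<exists>j\<in>{0..<l} - {k}. x - rr l j = 0"
        then obtain j where j: "j \<in> {0..<l} - {k}" "x - rr l j = 0" by blast
        have "j = k" by (rule uq) (use j in simp_all)
        thus False using j by simp
      qed
    qed
    ultimately show ?thesis using True x0 dm
      by (simp add: regular_point_def meets_mu_axis_orthogonally_def)
  next
    case False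
    have k0: "k \<noteq> 0"
    proof
      assume "k = 0"
      hence "x = 0" using k(2) by (simp add: rr_def)
      thus False using False by simp
    qed
    have kk: "k + k \<noteq> l"
    proof
      assume h: "k + k = l"
      hence l2: "l = 2 * k" by simp
      hence "x = of_nat (l\<^sup>2) / 4" using k(2) half_sq[of k] by simp
      moreover have "even l" using l2 by simp
      ultimately show False using False by simp
    qed
    define k' where "k' = l - k"
    have k'1: "k' < l" using k(1) k0 unfolding k'_def by linarith
    have k'2: "k' \<noteq> k" using kk unfolding k'_def by linarith
    have lk: "l - k' = k" using k(1) unfolding k'_def by linarith
    have k'3: "rr l k' = x" unfolding rr_def k(2) lk by (simp add: k'_def mult.commute)
    note k' = k'1 k'2 k'3
    have "T i = 0" for i
    proof (cases "i = k")
      case True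
      show ?thesis unfolding T_def using k' True by (intro prod_zero) (auto intro!: bexI[of _ k'])
    next
      case False
      show ?thesis unfolding T_def using k False by (intro prod_zero) (auto intro!: bexI[of _ k])
    qed
    hence "d_lam (Gamma_eq l) x 0 = 0" using dl by simp
    hence sp: "singular_point (Gamma_eq l) x 0" using x0 dm by (simp add: singular_point_def)
    show ?thesis using sp by (simp only: if_not_P[OF False])
  qed
qed


end
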